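(* Fix $b\in\mathbb{N}$. Any $b$-pattern $P$ consisting of crosses and exactly one circle is realizable in $L=\mathbb{N}\times\mathbb{N}$. Consequently, the graph $G_b$ is not connected.
   Context: For $r,s\in\mathbb{N}$, $\gcd_b(r,s)=\max\{k\in\mathbb{N} : k\mid r \text{ and } k^b\mid s\}$; a point $(r,s)\in L$ is $b$-visible if $\gcd_b(r,s)=1$ and $b$-invisible otherwise. A $b$-pattern $P$ is obtained by choosing a positive integer $w$ and assigning to each $(r,s)\in L$ with $1\le r\le w$, $1\le s\le w^b$ either a cross, a circle, or neither. $P$ is realizable in $L$ if there is $(u,v)\in L$ such that $(u+r,v+s)$ is $b$-visible for every circle $(r,s)$ of $P$ and $b$-invisible for every cross $(r,s)$ of $P$. The graph $G_b$ has as vertices the $b$-visible points of $L$, with an edge between two such points whenever their Euclidean distance is $1$. *)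

theory Defs
  imports Complex_Main
begin

text \<open>Here \<open>\<nat>\<close> denotes the positive integers, so L = {(r,s). r \<ge> 1 \<and> s \<ge> 1}.\<close>

definition inL :: "nat \<times> nat \<Rightarrow> bool" where
  "inL p \<longleftrightarrow> fst p \<ge> 1 \<and> snd p \<ge> 1"

definition gcd_b :: "nat \<Rightarrow> nat \<Rightarrow> nat \<Rightarrow> nat" where
  "gcd_b b r s = Max {k. k \<ge> 1 \<and> k dvd r \<and> k ^ b dvd s}"

definition b_visible :: "nat \<Rightarrow> nat \<times> nat \<Rightarrow> bool" where
  "b_visible b p \<longleftrightarrow> inL p \<and> gcd_b b (fst p) (snd p) = 1"

definition b_invisible :: "nat \<Rightarrow> nat \<times> nat \<Rightarrow> bool" where
  "b_invisible b p \<longleftrightarrow> inL p \<and> gcd_b b (fst p) (snd p) \<noteq> 1"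

definition b_pattern :: "nat \<Rightarrow> nat \<Rightarrow> (nat \<times> nat) set \<Rightarrow> (nat \<times> nat) set \<Rightarrow> bool" where
  "b_pattern b w circles crosses \<longleftrightarrow> w \<ge> 1 \<and> circles \<inter> crosses = {} \<and>
     (\<forall>(r,s) \<in> circles \<union> crosses. 1 \<le> r \<and> r \<le> w \<and> 1 \<le> s \<and> s \<le> w ^ b)"

definition realizable :: "nat \<Rightarrow> (nat \<times> nat) set \<Rightarrow> (nat \<times> nat) set \<Rightarrow> bool" where
  "realizable b circles crosses \<longleftrightarrow> (\<exists>u v. inL (u, v) \<and>
     (\<forall>(r,s) \<in> circles. b_visible b (u + r, v + s)) \<and>
     (\<forall>(r,s) \<in> crosses. b_invisible b (u + r, v + s)))"

definition edist :: "nat \<times> nat \<Rightarrow> nat \<times> nat \<Rightarrow> real" where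
  "edist p q = sqrt ((real (fst p) - real (fst q))\<^sup>2 + (real (snd p) - real (snd q))\<^sup>2)"

definition G_adj :: "nat \<Rightarrow> nat \<times> nat \<Rightarrow> nat \<times> nat \<Rightarrow> bool" where
  "G_adj b p q \<longleftrightarrow> b_visible b p \<and> b_visible b q \<and> edist p q = 1"

definition G_connected :: "nat \<Rightarrow> bool" where
  "G_connected b \<longleftrightarrow> (\<forall>p q. b_visible b p \<and> b_visible b q \<longrightarrow> (G_adj b)\<^sup>*\<^sup>* p q)"

end

theory Submission
  imports Defs "HOL-Number_Theory.Number_Theory" "HOL-Library.Nat_Bijection"
begin


lemma gcdb_set_finite: "(r::nat) \<ge> 1 \<Longrightarrow> finite {k. k \<ge> 1 \<and> k dvd r \<and> k ^ b dvd s}"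
  by (rule finite_subset[of _ "{..r}"]) (auto intro!: dvd_imp_le)

lemma gcdb_ge: "r \<ge> 1 \<Longrightarrow> k \<ge> 1 \<Longrightarrow> k dvd r \<Longrightarrow> k ^ b dvd s \<Longrightarrow> k \<le> gcd_b b r s"
  unfolding gcd_b_def using gcdb_set_finite by (intro Max_ge) auto

lemma gcdb_mem: "r \<ge> 1 \<Longrightarrow> gcd_b b r s \<in> {k. k \<ge> 1 \<and> k dvd r \<and> k ^ b dvd s}"
  unfolding gcd_b_def using gcdb_set_finite[of r b s] by (intro Max_in) auto

lemma gcdb_one: "r \<ge> 1 \<Longrightarrow> (\<And>k. k dvd r \<Longrightarrow> k ^ b dvd s \<Longrightarrow> k = 1) \<Longrightarrow> gcd_b b r s = 1"
  using gcdb_mem[of r b s] by auto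

lemma dvd_same_lt:
  fixes d x a a' :: nat
  assumes "d dvd x + a" "d dvd x + a'" "a < d" "a' < d"
  shows "a = a'"
proof (rule ccontr)
  assume ne: "a \<noteq> a'"
  have "int d dvd int (x + a) - int (x + a')"
    using assms by (metis dvd_diff int_dvd_int_iff)
  hence "int d dvd int a - int a'" by simp
  hence "\<bar>int d\<bar> \<le> \<bar>int a - int a'\<bar>" using ne by (intro dvd_imp_le_int) auto
  thus False using assms by auto
qed

lemma res_dvd: "[u = p - r] (mod p) \<Longrightarrow> r \<le> p \<Longrightarrow> (p::nat) dvd u + r"
  by (metis add.commute cong_add_lcancel_nat cong_dvd_iff cong_refl le_add_diff_inverse dvd_refl cong_add cong_sym)

lemma part1:
  fixes b w :: nat and c :: "nat \<times> nat" and crosses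
  assumes b1: "b \<ge> 1" and pat: "b_pattern b w {c} crosses"
  shows "realizable b {c} crosses"
proof -
  obtain r0 s0 where c: "c = (r0, s0)" by fastforce
  have w1: "w \<ge> 1" and disj: "c \<notin> crosses"
    and win: "\<And>r s. (r, s) \<in> insert c crosses \<Longrightarrow> 1 \<le> r \<and> r \<le> w \<and> 1 \<le> s \<and> s \<le> w ^ b"
    using pat unfolding b_pattern_def by auto
  have finC: "finite crosses"
    by (rule finite_subset[of _ "{1..w} \<times> {1..w^b}"]) (use win in fastforce, simp)
  define S where "S = {p::nat. prime p \<and> w < p}"
  have infS: "infinite S"
  proof
    assume "finite S"
    then obtain p where "prime p" "p > Max (insert w S)" using bigger_prime by blast
    moreover have "w \<le> Max (insert w S)" using \<open>finite S\<close> by simp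
    moreover have "p \<in> S" unfolding S_def using calculation by auto
    moreover have "p \<le> Max (insert w S)" using \<open>finite S\<close> calculation(4) by simp
    ultimately show False by simp
  qed
  define pr where "pr = (\<lambda>x. enumerate S (prod_encode x))"
  have prS: "prime (pr x) \<and> w < pr x" for x
    using enumerate_in_set[OF infS] unfolding pr_def S_def by blast
  have prinj: "pr x = pr y \<Longrightarrow> x = y" for x y
  proof -
    have sm: "strict_mono (enumerate S)" using enumerate_mono[OF _ infS] by (simp add: strict_mono_def)
    assume "pr x = pr y" thus "x = y" unfolding pr_def using strict_mono_eq[OF sm] by simp
  qed
  have prpow: "w ^ b < pr x ^ b" for x using prS[of x] b1
    by (simp add: power_strict_mono)
  have cop: "coprime (pr x) (pr y)" if "x \<noteq> y" for x y
    using prS prinj that by (metis primes_coprime)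
  obtain x where x: "\<forall>i\<in>crosses. [x = pr i - fst i] (mod pr i)"
    using chinese_remainder_nat[OF finC, of pr "\<lambda>i. pr i - fst i"] cop by blast
  define M where "M = (\<Prod>i\<in>crosses. pr i)"
  have M1: "M \<ge> 1" unfolding M_def using prS
    using prod_pos[of crosses pr] prS prime_gt_0_nat by (simp add: Suc_le_eq)
  define u where "u = x + M"
  have u1: "u \<ge> 1" using M1 u_def by simp
  have udvd: "pr i dvd u + fst i" if "i \<in> crosses" for i
  proof -
    have M0: "[M = 0] (mod pr i)" unfolding M_def using that finC
      by (simp add: cong_0_iff dvd_prod_eqI)
    have "[u = pr i - fst i] (mod pr i)" unfolding u_def using cong_add[OF x[rule_format, OF that] M0] by simp
    moreover have "fst i \<le> pr i" using win[of "fst i" "snd i"] prS[of i] that by auto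
    ultimately show ?thesis by (rule res_dvd)
  qed
  obtain a where a: "\<forall>i\<in>crosses. [a = pr i ^ b - snd i] (mod pr i ^ b)"
  proof -
    have "\<forall>i\<in>crosses. \<forall>j\<in>crosses. i \<noteq> j \<longrightarrow> coprime (pr i ^ b) (pr j ^ b)"
      using cop by simp
    from chinese_remainder_nat[OF finC this, of "\<lambda>i. pr i ^ b - snd i"] show ?thesis using that by blast
  qed
  define N where "N = (\<Prod>i\<in>crosses. pr i ^ b)"
  define n where "n = u + r0"
  have n1: "n \<ge> 1" using u1 n_def by simp
  define Q where "Q = {q. prime q \<and> q dvd n \<and> q \<notin> pr ` crosses}"
  have finQ: "finite Q" unfolding Q_def
    by (rule finite_subset[of _ "{..n}"]) (use n1 in \<open>auto intro!: dvd_imp_le\<close>)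
  define m where "m = \<Prod>Q"
  have m1: "m \<ge> 1" unfolding m_def
    using prod_pos[of Q "\<lambda>x. x"] prime_gt_0_nat by (force simp: Suc_le_eq Q_def)
  have copmN: "coprime m N" unfolding m_def N_def
  proof (intro prod_coprime_left prod_coprime_right)
    fix q i assume "q \<in> Q" "i \<in> crosses"
    hence "prime q" "q \<noteq> pr i" unfolding Q_def by auto
    thus "coprime q (pr i ^ b)" using prS[of i] by (simp add: primes_coprime)
  qed
  obtain y where y: "[y = a] (mod N)" "[y = m * s0 + 1 - s0] (mod m)"
    using binary_chinese_remainder_nat[OF copmN[THEN coprime_commute[THEN iffD1]]] by blast
  define v where "v = y + N * m"
  have N1: "N \<ge> 1" unfolding N_def using prS
    by (metis One_nat_def Suc_leI finC prime_gt_0_nat prod_pos zero_less_power)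
  have v1: "v \<ge> 1" using N1 m1 v_def by (simp add: Suc_le_eq)
  have vN: "[v = a] (mod N)" using y(1) unfolding v_def cong_def by simp
  have vm: "[v = m * s0 + 1 - s0] (mod m)" using y(2) unfolding v_def cong_def by simp
  have vs0: "[v + s0 = 1] (mod m)"
  proof -
    have "[v + s0 = m * s0 + 1 - s0 + s0] (mod m)" using vm cong_add cong_refl by blast
    moreover have "s0 \<le> m * s0" using m1 by simp
    hence "m * s0 + 1 - s0 + s0 = 1 + m * s0" by linarith
    moreover have "[1 + m * s0 = 1] (mod m)" unfolding cong_def by (rule mod_mult_self2)
    ultimately show ?thesis using cong_trans by metis
  qed
  have vdvd: "pr i ^ b dvd v + snd i" if "i \<in> crosses" for i
  proof -
    have "pr i ^ b dvd N" unfolding N_def using that finC by (simp add: dvd_prod_eqI)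
    hence "[v = pr i ^ b - snd i] (mod pr i ^ b)" using vN a that
      by (meson cong_dvd_modulus_nat cong_trans)
    moreover have "snd i \<le> pr i ^ b" using win[of "fst i" "snd i"] prpow[of i] that by auto
    ultimately show ?thesis by (intro res_dvd) auto
  qed
  show ?thesis unfolding realizable_def
  proof (intro exI conjI ballI)
    show "inL (u, v)" using u1 v1 unfolding inL_def by auto
  next
    fix p assume "p \<in> crosses"
    obtain r s where p: "p = (r, s)" by fastforce
    have "1 \<le> r" using win[of r s] \<open>p \<in> crosses\<close> p by auto
    have "pr p \<le> gcd_b b (u + r) (v + s)"
      using gcdb_ge[of "u + r" "pr p" b "v + s"] udvd[OF \<open>p \<in> crosses\<close>] vdvd[OF \<open>p \<in> crosses\<close>] prS[of p] p \<open>1 \<le> r\<close>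
      by (simp add: prime_ge_1_nat)
    moreover have "pr p > 1" using prS[of p] prime_gt_1_nat by blast
    ultimately show "case p of (r, s) \<Rightarrow> b_invisible b (u + r, v + s)"
      using p u1 \<open>1 \<le> r\<close> win[of r s] \<open>p \<in> crosses\<close> unfolding b_invisible_def inL_def by auto
  next
    fix p assume "p \<in> {c}"
    hence p: "p = (r0, s0)" using c by simp
    have r0s0: "1 \<le> r0" "r0 \<le> w" "1 \<le> s0" "s0 \<le> w ^ b" using win[of r0 s0] c by auto
    have "gcd_b b n (v + s0) = 1"
    proof (rule gcdb_one[OF n1])
      fix k assume k: "k dvd n" "k ^ b dvd v + s0"
      show "k = 1"
      proof (rule ccontr)
        assume "k \<noteq> 1"
        then obtain q where q: "prime q" "q dvd k" using prime_factor_nat by blast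
        have qn: "q dvd n" using q k by (meson dvd_trans)
        have qb: "q ^ b dvd v + s0" using q k by (meson dvd_trans dvd_power_same)
        show False
        proof (cases "q \<in> pr ` crosses")
          case True
          then obtain i where i: "i \<in> crosses" "q = pr i" by blast
          obtain r s where rs: "i = (r, s)" by fastforce
          have wr: "r \<le> w" "s \<le> w ^ b" using win[of r s] i(1) rs by auto
          have "q dvd u + r" using udvd[OF i(1)] i(2) rs by simp
          moreover have "q dvd u + r0" using qn n_def by simp
          moreover have "r < q" using wr prS[of i] i(2) by simp
          moreover have "r0 < q" using r0s0 prS[of i] i(2) by simp
          ultimately have "r = r0" by (rule dvd_same_lt)
          have "q ^ b dvd v + s" using vdvd[OF i(1)] i(2) rs by simp
          moreover have "s < q ^ b" using wr prpow[of i] i(2) by simp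
          moreover have "s0 < q ^ b" using r0s0 prpow[of i] i(2) by simp
          ultimately have "s = s0" using qb dvd_same_lt by blast
          show False using \<open>r = r0\<close> \<open>s = s0\<close> i rs c disj by simp
        next
          case False
          hence "q \<in> Q" using q qn unfolding Q_def by auto
          hence "q dvd m" unfolding m_def using finQ by (simp add: dvd_prod_eqI)
          hence "[v + s0 = 1] (mod q)" using vs0 cong_dvd_modulus_nat by blast
          moreover have "q dvd v + s0" using qb b1 dvd_power[of b q] dvd_trans by auto
          ultimately have "q dvd 1" by (metis cong_dvd_iff)
          thus False using q by simp
        qed
      qed
    qed
    thus "case p of (r, s) \<Rightarrow> b_visible b (u + r, v + s)"
      using p n_def u1 v1 unfolding b_visible_def inL_def by auto
  qed
qed

lemma sq1: "(d::int) \<noteq> 0 \<Longrightarrow> 1 \<le> d\<^sup>2"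
proof -
  assume "d \<noteq> 0"
  hence "1 \<le> \<bar>d\<bar>" by linarith
  hence "1 * 1 \<le> \<bar>d\<bar> * \<bar>d\<bar>" by (intro mult_mono) auto
  thus ?thesis by (simp add: power2_eq_square)
qed

lemma edist1:
  assumes "edist p q = 1"
  shows "q = (fst p + 1, snd p) \<or> q = (fst p - 1, snd p) \<or> q = (fst p, snd p + 1) \<or> q = (fst p, snd p - 1)"
proof -
  obtain a b c d where pq: "p = (a, b)" "q = (c, d)" by fastforce
  define d1 where "d1 = int a - int c"
  define d2 where "d2 = int b - int d"
  have "(real a - real c)\<^sup>2 + (real b - real d)\<^sup>2 = 1"
    using assms unfolding edist_def pq by simp
  hence "real_of_int (d1\<^sup>2 + d2\<^sup>2) = 1" unfolding d1_def d2_def by simp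
  hence e: "d1\<^sup>2 + d2\<^sup>2 = 1" by linarith
  have "d1\<^sup>2 \<ge> 0" "d2\<^sup>2 \<ge> 0" by simp_all
  hence "(d1 = 0 \<and> d2\<^sup>2 = 1) \<or> (d2 = 0 \<and> d1\<^sup>2 = 1)"
  proof (cases "d1 = 0")
    case True thus ?thesis using e by simp
  next
    case False hence "1 \<le> d1\<^sup>2" by (rule sq1)
    hence "d2\<^sup>2 \<le> 0" using e by linarith
    hence "d2 = 0" by simp
    thus ?thesis using e by simp
  qed
  hence "(d1 = 0 \<and> (d2 = 1 \<or> d2 = -1)) \<or> (d2 = 0 \<and> (d1 = 1 \<or> d1 = -1))"
    by (simp add: power2_eq_1_iff)
  thus ?thesis
  proof (elim disjE conjE)
    assume "d1 = 0" "d2 = 1" thus ?thesis unfolding d1_def d2_def pq by simp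
  next
    assume "d1 = 0" "d2 = -1" thus ?thesis unfolding d1_def d2_def pq by simp
  next
    assume "d2 = 0" "d1 = 1" thus ?thesis unfolding d1_def d2_def pq by simp
  next
    assume "d2 = 0" "d1 = -1" thus ?thesis unfolding d1_def d2_def pq by simp
  qed
qed

theorem mainTheorem8:
  fixes b :: nat
  assumes "b \<ge> 1"
  shows "(\<forall>w c crosses. b_pattern b w {c} crosses \<longrightarrow> realizable b {c} crosses)
         \<and> \<not> G_connected b"
proof
  show P1: "\<forall>w c crosses. b_pattern b w {c} crosses \<longrightarrow> realizable b {c} crosses"
    using part1[OF assms] by blast
  define X where "X = {(1::nat, 2::nat), (3, 2), (2, 1), (2, 3)}"
  have w3: "(3::nat) \<le> 3 ^ b" using power_increasing[of 1 b "3::nat"] assms by simp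
  have "b_pattern b 3 {(2, 2)} X" unfolding b_pattern_def X_def using w3 by auto
  hence "realizable b {(2, 2)} X" using P1 by blast
  then obtain u v where uv: "inL (u, v)" "b_visible b (u + 2, v + 2)"
    and inv0: "\<forall>(r, s)\<in>X. b_invisible b (u + r, v + s)"
    unfolding realizable_def by blast
  have inv: "b_invisible b (u + 3, v + 2)" "b_invisible b (u + 1, v + 2)"
    "b_invisible b (u + 2, v + 3)" "b_invisible b (u + 2, v + 1)"
    using inv0 unfolding X_def by auto
  have vis11: "b_visible b (1, 1)"
    unfolding b_visible_def inL_def
    using gcdb_mem[of 1 b 1] by simp
  show "\<not> G_connected b"
  proof
    assume "G_connected b"
    hence "(G_adj b)\<^sup>*\<^sup>* (u + 2, v + 2) (1, 1)" using uv vis11 unfolding G_connected_def by blast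
    thus False
    proof (cases rule: converse_rtranclpE)
      case base thus False by simp
    next
      case (step y)
      hence "b_visible b y" "edist (u + 2, v + 2) y = 1" unfolding G_adj_def by auto
      moreover have "\<not> b_visible b y" if "edist (u + 2, v + 2) y = 1"
      proof -
        have "y = (u + 3, v + 2) \<or> y = (u + 1, v + 2) \<or> y = (u + 2, v + 3) \<or> y = (u + 2, v + 1)"
          using edist1[OF that] by (simp add: numeral_3_eq_3)
        thus ?thesis using inv
          unfolding b_visible_def b_invisible_def by auto
      qed
      ultimately show False by blast
    qed
  qed
qed

end
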